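(* Let $K\subset\mathbb{R}^M$ be compact with positive Lebesgue measure, for each $N$ let $\mu_N$ be a probability measure on a finite set $\Sigma_N$, and let $F_N:\mathbb{R}^M\times\Sigma_N\to\mathbb{R}$, $F:\mathbb{R}^M\to\mathbb{R}$ be measurable such that their restrictions to $K$ satisfy: $\sup_N\sup_{K\times\Sigma_N}|F_N|<\infty$, $F$ is bounded on $K$, for every $\varepsilon>0$ $\mu_N(\{s:\sup_{\mathbf{p}\in K}|F_N(\mathbf{p},s)-F(\mathbf{p})|>\varepsilon\})\to0$, and $\lim_N\frac1N\log\int_Ke^{NF}=\sup_KF$. Assume moreover: (a) there is $C_1<\infty$ with $\sup_N\sup_{\mathbb{R}^M\times\Sigma_N}F_N<C_1$; (b) there is $C_2<\infty$ with $\int_{\mathbb{R}^M}e^{F_N(\mathbf{p},s)}d\mathbf{p}<C_2$ for all $N$ and $s\in\Sigma_N$; (c) there is $\delta>0$ with $F_N(\mathbf{p},s)-\sup_KF<-\delta$ for all $N$ and all $(\mathbf{p},s)\in K^c\times\Sigma_N$. Then $$\lim_{N\to\infty}\frac1N\,\mathbb{E}_{\mu_N}\Big[\log\int_{\mathbb{R}^M}e^{NF_N(\mathbf{p},s)}d\mathbf{p}\Big]=\sup_KF.$$ *)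

theory Defs
  imports "HOL-Analysis.Analysis" "HOL-Probability.Probability"
begin

end

theory Submission
  imports Defs
begin
lemma setint_bdd:
  fixes g :: "'a::euclidean_space \<Rightarrow> real"
  assumes K: "K \<in> sets lebesgue" "emeasure lebesgue K < \<infinity>"
    and g: "g \<in> borel_measurable lebesgue" and b: "\<And>p. p \<in> K \<Longrightarrow> \<bar>g p\<bar> \<le> c"
  shows "set_integrable lebesgue K g"
  unfolding set_integrable_def
proof (rule Bochner_Integration.integrable_bound[where f="\<lambda>x. c * indicat_real K x"])
  show "integrable lebesgue (\<lambda>x. c * indicat_real K x)"
    using integrable_real_indicator[OF K] by simp
  show "(\<lambda>x. indicat_real K x *\<^sub>R g x) \<in> borel_measurable lebesgue"
    using g K by (intro borel_measurable_scaleR borel_measurable_indicator) auto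
  show "AE x in lebesgue. norm (indicat_real K x *\<^sub>R g x) \<le> norm (c * indicat_real K x)"
    using b by (intro AE_I2) (auto simp: indicator_def abs_mult intro: order.trans[OF _ abs_ge_self])
qed

lemma key:
  fixes f :: "'a::euclidean_space \<Rightarrow> real" and n :: nat
  assumes n: "n \<ge> 1"
    and f: "f \<in> borel_measurable lebesgue"
    and C1: "\<And>p. f p < C1"
    and C2: "(\<integral>\<^sup>+ p. ennreal (exp (f p)) \<partial>lebesgue) < ennreal C2"
    and T: "\<And>p. p \<notin> K \<Longrightarrow> f p \<le> T"
    and K: "K \<in> sets lebesgue"
  shows "integrable lebesgue (\<lambda>p. exp (real n * f p))"
    and "set_integrable lebesgue K (\<lambda>p. exp (real n * f p))"
    and "(LINT p:K|lebesgue. exp (real n * f p)) \<le> (LINT p|lebesgue. exp (real n * f p))"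
    and "(LINT p|lebesgue. exp (real n * f p)) \<le> (LINT p:K|lebesgue. exp (real n * f p)) + C2 * exp ((real n - 1) * T)"
    and "(LINT p|lebesgue. exp (real n * f p)) \<le> C2 * exp ((real n - 1) * C1)"
proof -
  have ie: "integrable lebesgue (\<lambda>p. exp (f p))"
    using C2 f by (intro integrableI_nonneg) (auto simp: less_top[symmetric] intro: order.strict_trans)
  have le2: "(LINT p|lebesgue. exp (f p)) \<le> C2"
  proof -
    have "(LINT p|lebesgue. exp (f p)) = enn2real (\<integral>\<^sup>+ p. ennreal (exp (f p)) \<partial>lebesgue)"
      using f by (intro integral_eq_nn_integral) auto
    also have "\<dots> \<le> C2"
      using C2 by (metis enn2real_ennreal enn2real_mono ennreal_less_top less_imp_le ennreal_neg enn2real_nonneg linorder_not_le order.strict_trans1 zero_less_iff_neq_zero ennreal_0 not_less_zero)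
    finally show ?thesis .
  qed
  have m: "(\<lambda>p. exp (real n * f p)) \<in> borel_measurable lebesgue" using f by measurable
  have pw1: "exp (real n * f p) \<le> exp ((real n - 1) * C1) * exp (f p)" for p
  proof -
    have "(real n - 1) * f p \<le> (real n - 1) * C1" using C1[of p] n by (intro mult_left_mono) auto
    hence "real n * f p \<le> (real n - 1) * C1 + f p" by (simp add: algebra_simps)
    thus ?thesis by (simp flip: exp_add)
  qed
  show i: "integrable lebesgue (\<lambda>p. exp (real n * f p))"
    by (rule Bochner_Integration.integrable_bound[OF integrable_mult_right[OF ie, of "exp ((real n - 1) * C1)"] m])
       (use pw1 in auto)
  show si: "set_integrable lebesgue K (\<lambda>p. exp (real n * f p))"
    unfolding set_integrable_def using integrable_mult_indicator[OF K i] by simp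
  show "(LINT p:K|lebesgue. exp (real n * f p)) \<le> (LINT p|lebesgue. exp (real n * f p))"
    unfolding set_lebesgue_integral_def
    using si i unfolding set_integrable_def by (intro integral_mono) (auto simp: indicator_def)
  show "(LINT p|lebesgue. exp (real n * f p)) \<le> C2 * exp ((real n - 1) * C1)"
  proof -
    have "(LINT p|lebesgue. exp (real n * f p)) \<le> (LINT p|lebesgue. exp ((real n - 1) * C1) * exp (f p))"
      using i ie pw1 by (intro integral_mono) auto
    also have "\<dots> = exp ((real n - 1) * C1) * (LINT p|lebesgue. exp (f p))" by simp
    also have "\<dots> \<le> exp ((real n - 1) * C1) * C2" using le2 by simp
    finally show ?thesis by (simp add: mult.commute)
  qed
  have pw2: "exp (real n * f p) \<le> indicator K p * exp (real n * f p) + exp ((real n - 1) * T) * exp (f p)" for p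
  proof (cases "p \<in> K")
    case False
    have "(real n - 1) * f p \<le> (real n - 1) * T" using T[OF False] n by (intro mult_left_mono) auto
    hence "real n * f p \<le> (real n - 1) * T + f p" by (simp add: algebra_simps)
    thus ?thesis using False by (simp flip: exp_add)
  qed auto
  have "(LINT p|lebesgue. exp (real n * f p)) \<le> (LINT p|lebesgue. indicator K p * exp (real n * f p) + exp ((real n - 1) * T) * exp (f p))"
    using i ie si pw2 unfolding set_integrable_def by (intro integral_mono) auto
  also have "\<dots> = (LINT p:K|lebesgue. exp (real n * f p)) + exp ((real n - 1) * T) * (LINT p|lebesgue. exp (f p))"
    using Bochner_Integration.integral_add[OF si[unfolded set_integrable_def] integrable_mult_right[OF ie, of "exp ((real n - 1) * T)"]]
    unfolding set_lebesgue_integral_def by simp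
  also have "\<dots> \<le> (LINT p:K|lebesgue. exp (real n * f p)) + exp ((real n - 1) * T) * C2"
    using le2 by simp
  finally show "(LINT p|lebesgue. exp (real n * f p)) \<le> (LINT p:K|lebesgue. exp (real n * f p)) + C2 * exp ((real n - 1) * T)"
    by (simp add: mult.commute)
qed
lemma ev_lin: assumes "(0::real) < d" shows "eventually (\<lambda>N. c \<le> real N * d) sequentially"
proof -
  have "eventually (\<lambda>N. c / d \<le> real N) sequentially"
    using filterlim_real_sequentially by (simp add: filterlim_at_top)
  thus ?thesis by eventually_elim (use assms in \<open>simp add: pos_divide_le_eq\<close>)
qed

theorem mainTheorem13:
  fixes K :: "(real ^ 'm) set"
    and \<Sigma> :: "nat \<Rightarrow> 's set"
    and \<mu> :: "nat \<Rightarrow> 's pmf"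
    and FN :: "nat \<Rightarrow> real ^ 'm \<Rightarrow> 's \<Rightarrow> real"
    and F :: "real ^ 'm \<Rightarrow> real"
  assumes K_compact: "compact K"
    and K_pos: "emeasure lebesgue K > 0"
    and \<Sigma>_finite: "\<And>N. finite (\<Sigma> N)"
    and \<mu>_on: "\<And>N. set_pmf (\<mu> N) \<subseteq> \<Sigma> N"
    and FN_meas: "\<And>N s. s \<in> \<Sigma> N \<Longrightarrow> (\<lambda>p. FN N p s) \<in> borel_measurable lebesgue"
    and F_meas: "F \<in> borel_measurable lebesgue"
    and FN_bdd_K: "\<exists>B. \<forall>N. \<forall>p\<in>K. \<forall>s\<in>\<Sigma> N. \<bar>FN N p s\<bar> \<le> B"
    and F_bdd_K: "bounded (F ` K)"
    and conv_prob: "\<And>\<epsilon>. \<epsilon> > 0 \<Longrightarrow>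
        (\<lambda>N. measure_pmf.prob (\<mu> N)
           {s \<in> \<Sigma> N. (SUP p\<in>K. \<bar>FN N p s - F p\<bar>) > \<epsilon>}) \<longlonglongrightarrow> 0"
    and laplace_K: "(\<lambda>N. ln (LINT p:K|lebesgue. exp (real N * F p)) / real N)
        \<longlonglongrightarrow> (SUP p\<in>K. F p)"
    and cond_a: "\<exists>C1. \<forall>N. \<forall>p. \<forall>s\<in>\<Sigma> N. FN N p s < C1"
    and cond_b: "\<exists>C2. \<forall>N. \<forall>s\<in>\<Sigma> N.
        (\<integral>\<^sup>+ p. ennreal (exp (FN N p s)) \<partial>lebesgue) < ennreal C2"
    and cond_c: "\<exists>\<delta>>0. \<forall>N. \<forall>p. \<forall>s\<in>\<Sigma> N. p \<notin> K \<longrightarrow>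
        FN N p s - (SUP q\<in>K. F q) < - \<delta>"
  shows "(\<lambda>N. measure_pmf.expectation (\<mu> N)
            (\<lambda>s. ln (LINT p|lebesgue. exp (real N * FN N p s))) / real N)
         \<longlonglongrightarrow> (SUP p\<in>K. F p)"
proof -
  define S where "S = (SUP p\<in>K. F p)"
  obtain B where B: "\<And>N p s. p \<in> K \<Longrightarrow> s \<in> \<Sigma> N \<Longrightarrow> \<bar>FN N p s\<bar> \<le> B" using FN_bdd_K by blast
  obtain BF where BF: "\<And>p. p \<in> K \<Longrightarrow> \<bar>F p\<bar> \<le> BF" using F_bdd_K by (auto simp: bounded_real)
  obtain C1 where C1: "\<And>N p s. s \<in> \<Sigma> N \<Longrightarrow> FN N p s < C1" using cond_a by blast
  obtain C2 where C2: "\<And>N s. s \<in> \<Sigma> N \<Longrightarrow> (\<integral>\<^sup>+ p. ennreal (exp (FN N p s)) \<partial>lebesgue) < ennreal C2"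
    using cond_b by blast
  obtain \<delta> where \<delta>: "\<delta> > 0" "\<And>N p s. s \<in> \<Sigma> N \<Longrightarrow> p \<notin> K \<Longrightarrow> FN N p s \<le> S - \<delta>"
    using cond_c unfolding S_def by (metis less_imp_le diff_less_eq add.commute diff_minus_eq_add less_diff_eq
       minus_diff_eq uminus_add_conv_diff)
  have Kl: "K \<in> lmeasurable" using K_compact by (rule lmeasurable_compact)
  have Ks: "K \<in> sets lebesgue" and Kf: "emeasure lebesgue K < \<infinity>"
    using fmeasurableD[OF Kl] fmeasurableD2[OF Kl] by (auto simp: less_top)
  define m where "m = measure lebesgue K"
  have m: "m > 0"
    using K_pos Kf unfolding m_def by (simp add: emeasure_eq_ennreal_measure less_top[symmetric]) 
  have Kne: "K \<noteq> {}" using m unfolding m_def by auto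
  have bddF: "bdd_above (F ` K)" using BF by (intro bdd_aboveI2[of _ _ BF]) (force simp: abs_le_iff)
  have FS: "\<And>p. p \<in> K \<Longrightarrow> F p \<le> S" unfolding S_def using bddF by (intro cSUP_upper)
  have SBF: "\<bar>S\<bar> \<le> BF"
  proof -
    obtain p where p: "p \<in> K" using Kne by blast
    have "S \<le> BF" unfolding S_def using BF Kne by (intro cSUP_least) (auto simp: abs_le_iff)
    moreover have "-BF \<le> S" using FS[OF p] BF[OF p] by auto
    ultimately show ?thesis by auto
  qed
  have sc: "(LINT p:K|lebesgue. c) = m * c" for c
    using set_integral_const[OF Ks, of c] Kf unfolding m_def by simp
  define I where "I N s = (LINT p|lebesgue. exp (real N * FN N p s))" for N s
  define A where "A N s = (LINT p:K|lebesgue. exp (real N * FN N p s))" for N s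
  define J where "J N = (LINT p:K|lebesgue. exp (real N * F p))" for N
  define bad where "bad N \<epsilon> = {s \<in> \<Sigma> N. (SUP p\<in>K. \<bar>FN N p s - F p\<bar>) > \<epsilon>}" for N \<epsilon>
  have kf: "A N s \<le> I N s \<and> I N s \<le> A N s + C2 * exp ((real N - 1) * (S - \<delta>))
         \<and> I N s \<le> C2 * exp ((real N - 1) * C1)"
    if N: "N \<ge> 1" and s: "s \<in> \<Sigma> N" for N s
    using key(3-5)[OF N FN_meas[OF s] C1[OF s] C2[OF s] \<delta>(2)[OF s] Ks] unfolding A_def I_def by auto
  have sic: "set_integrable lebesgue K (\<lambda>_. c)" for c :: real
    by (rule setint_bdd[OF Ks Kf, of _ "\<bar>c\<bar>"]) auto
  have siF: "set_integrable lebesgue K (\<lambda>p. exp (real N * F p))" for N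
  proof (rule setint_bdd[OF Ks Kf, of _ "exp (real N * BF)"])
    show "(\<lambda>p. exp (real N * F p)) \<in> borel_measurable lebesgue" using F_meas by measurable
    fix p assume p: "p \<in> K"
    have "real N * F p \<le> real N * BF" using BF[OF p] by (intro mult_left_mono) auto
    thus "\<bar>exp (real N * F p)\<bar> \<le> exp (real N * BF)" by simp
  qed
  have siFN: "set_integrable lebesgue K (\<lambda>p. exp (real N * FN N p s))" if N: "N \<ge> 1" and s: "s \<in> \<Sigma> N" for N s
    using key(2)[OF N FN_meas[OF s] C1[OF s] C2[OF s] \<delta>(2)[OF s] Ks] .
  have A_lo: "m * exp (- (real N * B)) \<le> A N s" if N: "N \<ge> 1" and s: "s \<in> \<Sigma> N" for N s
  proof -
    have "m * exp (- (real N * B)) = (LINT p:K|lebesgue. exp (- (real N * B)))"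
      by (simp add: sc)
    also have "\<dots> \<le> A N s" unfolding A_def
    proof (rule set_integral_mono[OF sic siFN[OF N s]])
      fix p assume p: "p \<in> K"
      have "- (real N * B) \<le> real N * FN N p s"
      proof -
        have "real N * (- B) \<le> real N * FN N p s" using B[OF p s] by (intro mult_left_mono) auto
        thus ?thesis by simp
      qed
      thus "exp (- (real N * B)) \<le> exp (real N * FN N p s)" by simp
    qed
    finally show ?thesis .
  qed
  have J_lo: "m * exp (- (real N * BF)) \<le> J N" for N
  proof -
    have "m * exp (- (real N * BF)) = (LINT p:K|lebesgue. exp (- (real N * BF)))"
      by (simp add: sc)
    also have "\<dots> \<le> J N" unfolding J_def
    proof (rule set_integral_mono[OF sic siF])
      fix p assume p: "p \<in> K"
      have "- (real N * BF) \<le> real N * F p"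
      proof -
        have "real N * (- BF) \<le> real N * F p" using BF[OF p] by (intro mult_left_mono) auto
        thus ?thesis by simp
      qed
      thus "exp (- (real N * BF)) \<le> exp (real N * F p)" by simp
    qed
    finally show ?thesis .
  qed
  have Jpos: "J N > 0" for N using J_lo[of N] m by (smt (verit) exp_gt_zero mult_pos_pos)
  have good: "exp (- (real N * \<epsilon>)) * J N \<le> A N s \<and> A N s \<le> exp (real N * \<epsilon>) * J N"
    if N: "N \<ge> 1" and s: "s \<in> \<Sigma> N" and nb: "s \<notin> bad N \<epsilon>" for N s \<epsilon>
  proof -
    have bdd: "bdd_above ((\<lambda>p. \<bar>FN N p s - F p\<bar>) ` K)"
      using B[OF _ s] BF by (intro bdd_aboveI2[of _ _ "B + BF"]) (smt (verit))
    have cl: "\<bar>FN N p s - F p\<bar> \<le> \<epsilon>" if p: "p \<in> K" for p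
      using cSUP_upper[OF p bdd] nb s unfolding bad_def by auto
    have "exp (- (real N * \<epsilon>)) * J N = (LINT p:K|lebesgue. exp (- (real N * \<epsilon>)) * exp (real N * F p))"
      unfolding J_def by (simp add: set_integral_mult_right)
    also have "\<dots> \<le> A N s" unfolding A_def
    proof (rule set_integral_mono[OF _ siFN[OF N s]])
      show "set_integrable lebesgue K (\<lambda>p. exp (- (real N * \<epsilon>)) * exp (real N * F p))"
        using integrable_mult_right[OF siF[of N, unfolded set_integrable_def], of "exp (- (real N * \<epsilon>))"]
        unfolding set_integrable_def by (simp add: mult.left_commute)
      fix p assume p: "p \<in> K"
      have "real N * (F p - \<epsilon>) \<le> real N * FN N p s" using cl[OF p] by (intro mult_left_mono) auto
      thus "exp (- (real N * \<epsilon>)) * exp (real N * F p) \<le> exp (real N * FN N p s)"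
        by (simp add: algebra_simps flip: exp_add)
    qed
    finally have 1: "exp (- (real N * \<epsilon>)) * J N \<le> A N s" .
    have "A N s \<le> (LINT p:K|lebesgue. exp (real N * \<epsilon>) * exp (real N * F p))" unfolding A_def
    proof (rule set_integral_mono[OF siFN[OF N s]])
      show "set_integrable lebesgue K (\<lambda>p. exp (real N * \<epsilon>) * exp (real N * F p))"
        using integrable_mult_right[OF siF[of N, unfolded set_integrable_def], of "exp (real N * \<epsilon>)"]
        unfolding set_integrable_def by (simp add: mult.left_commute)
      fix p assume p: "p \<in> K"
      have "real N * FN N p s \<le> real N * (F p + \<epsilon>)" using cl[OF p] by (intro mult_left_mono) auto
      thus "exp (real N * FN N p s) \<le> exp (real N * \<epsilon>) * exp (real N * F p)"
        by (simp add: algebra_simps flip: exp_add)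
    qed
    also have "\<dots> = exp (real N * \<epsilon>) * J N"
      unfolding J_def by (simp add: set_integral_mult_right)
    finally show ?thesis using 1 by simp
  qed
  obtain s0 where s0: "s0 \<in> \<Sigma> 1" using set_pmf_not_empty[of "\<mu> 1"] \<mu>_on by blast
  have C2pos: "C2 > 0"
  proof -
    have "0 < ennreal C2" using C2[OF s0] by (metis bot.extremum_strict not_gr_zero)
    thus ?thesis by simp
  qed
  define M0 where "M0 = \<bar>ln m\<bar> + B + \<bar>ln C2\<bar> + \<bar>C1\<bar>"
  have Ipos: "I N s > 0" if N: "N \<ge> 1" and s: "s \<in> \<Sigma> N" for N s
    using kf[OF N s] A_lo[OF N s] m by (smt (verit) exp_gt_zero mult_pos_pos)
  have unif: "\<bar>ln (I N s)\<bar> \<le> real N * M0" if N: "N \<ge> 1" and s: "s \<in> \<Sigma> N" for N s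
  proof -
    have lo0: "m * exp (- (real N * B)) \<le> I N s" using kf[OF N s] A_lo[OF N s] by linarith
    have "ln (m * exp (- (real N * B))) \<le> ln (I N s)"
      using lo0 m Ipos[OF N s] by (subst ln_le_cancel_iff) auto
    hence lo: "ln m - real N * B \<le> ln (I N s)" using m by (simp add: ln_mult)
    have "ln (I N s) \<le> ln (C2 * exp ((real N - 1) * C1))"
      using kf[OF N s] Ipos[OF N s] C2pos by (subst ln_le_cancel_iff) auto
    hence hi: "ln (I N s) \<le> ln C2 + (real N - 1) * C1" using C2pos by (simp add: ln_mult)
    have N1: "(1::real) \<le> real N" using N by simp
    have a1: "\<bar>ln m\<bar> \<le> real N * \<bar>ln m\<bar>" using N1 by (simp add: mult_le_cancel_right1)
    have a2: "\<bar>ln C2\<bar> \<le> real N * \<bar>ln C2\<bar>" using N1 by (simp add: mult_le_cancel_right1)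
    have a3: "(real N - 1) * C1 \<le> real N * \<bar>C1\<bar>"
    proof -
      have "(real N - 1) * C1 \<le> (real N - 1) * \<bar>C1\<bar>" using N1 by (intro mult_left_mono) auto
      also have "\<dots> \<le> real N * \<bar>C1\<bar>" by (simp add: algebra_simps)
      finally show ?thesis .
    qed
    have a4: "0 \<le> real N * \<bar>C1\<bar>" by simp
    have "B \<ge> 0" using B[OF _ s] Kne by (meson abs_ge_zero all_not_in_conv order.trans)
    hence a5: "0 \<le> real N * B" by simp
    have a6: "0 \<le> real N * \<bar>ln C2\<bar>" "0 \<le> real N * \<bar>ln m\<bar>" by simp_all
    have e: "real N * M0 = real N * \<bar>ln m\<bar> + real N * B + real N * \<bar>ln C2\<bar> + real N * \<bar>C1\<bar>"
      by (simp add: M0_def algebra_simps)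
    have ab: "ln m \<le> \<bar>ln m\<bar>" "- ln m \<le> \<bar>ln m\<bar>" "ln C2 \<le> \<bar>ln C2\<bar>" by auto
    show ?thesis unfolding abs_le_iff e using lo hi a1 a2 a3 a4 a5 a6 ab by linarith
  qed
  define M1 where "M1 = M0 + BF"
  have M1: "\<bar>ln (I N s) / real N - S\<bar> \<le> M1" if N: "N \<ge> 1" and s: "s \<in> \<Sigma> N" for N s
  proof -
    have "\<bar>ln (I N s) / real N\<bar> \<le> M0" using unif[OF N s] N
      by (simp add: abs_div pos_divide_le_eq mult.commute)
    thus ?thesis using SBF unfolding M1_def by linarith
  qed
  have M1pos: "M1 \<ge> 0" using M1[OF _ s0] by (meson abs_ge_zero order.trans order_refl)
  have goodb: "\<bar>ln (I N s) - real N * S\<bar> \<le> 3 * real N * \<epsilon>"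
    if N: "N \<ge> 1" and s: "s \<in> \<Sigma> N" and nb: "s \<notin> bad N \<epsilon>" and e: "\<epsilon> > 0"
      and LS: "dist (ln (J N) / real N) S < \<epsilon>" and l2: "ln 2 \<le> real N * \<epsilon>"
      and lc: "ln C2 - S + \<delta> \<le> real N * \<delta>"
    for N s \<epsilon>
  proof -
    have Np: "real N > 0" using N by simp
    have lnJ: "ln (J N) = real N * (ln (J N) / real N)" using Np by simp
    define LN where "LN = ln (J N) / real N"
    have LS': "S - \<epsilon> < LN" "LN < S + \<epsilon>" using LS unfolding LN_def dist_real_def by auto
    note gd = good[OF N s nb]
    have "ln (exp (- (real N * \<epsilon>)) * J N) \<le> ln (I N s)"
      using gd kf[OF N s] Jpos[of N] Ipos[OF N s] by (subst ln_le_cancel_iff) auto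
    hence "- (real N * \<epsilon>) + real N * LN \<le> ln (I N s)"
      using Jpos[of N] lnJ unfolding LN_def by (simp add: ln_mult)
    moreover have "real N * (S - \<epsilon>) \<le> real N * LN" using LS' Np by (intro mult_left_mono) auto
    ultimately have lo: "real N * S - 2 * real N * \<epsilon> \<le> ln (I N s)" by (simp add: algebra_simps)
    have e1: "exp (real N * \<epsilon>) * J N \<le> exp (real N * (S + 2 * \<epsilon>))"
    proof -
      have "exp (real N * \<epsilon>) * J N = exp (real N * \<epsilon> + real N * LN)"
        using Jpos[of N] lnJ unfolding LN_def by (simp add: exp_add)
      also have "\<dots> \<le> exp (real N * (S + 2 * \<epsilon>))"
      proof -
        have "real N * LN \<le> real N * (S + \<epsilon>)" using LS' Np by (intro mult_left_mono) auto
        thus ?thesis by (simp add: algebra_simps)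
      qed
      finally show ?thesis .
    qed
    have e2: "C2 * exp ((real N - 1) * (S - \<delta>)) \<le> exp (real N * (S + 2 * \<epsilon>))"
    proof -
      have "C2 * exp ((real N - 1) * (S - \<delta>)) = exp (ln C2 + (real N - 1) * (S - \<delta>))"
        using C2pos by (simp add: exp_add)
      also have "\<dots> \<le> exp (real N * (S + 2 * \<epsilon>))"
      proof -
        have "(real N - 1) * (S - \<delta>) = real N * S - real N * \<delta> - S + \<delta>" by (simp add: algebra_simps)
        moreover have "0 \<le> real N * \<epsilon>" using e by simp
        ultimately show ?thesis using lc by (simp add: algebra_simps)
      qed
      finally show ?thesis .
    qed
    have "I N s \<le> 2 * exp (real N * (S + 2 * \<epsilon>))" using kf[OF N s] gd e1 e2 by linarith
    hence "ln (I N s) \<le> ln (2 * exp (real N * (S + 2 * \<epsilon>)))"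
      using Ipos[OF N s] by (subst ln_le_cancel_iff) auto
    hence "ln (I N s) \<le> ln 2 + real N * (S + 2 * \<epsilon>)" by (simp add: ln_mult)
    hence hi: "ln (I N s) \<le> real N * S + 3 * real N * \<epsilon>" using l2 by (simp add: algebra_simps)
    have "0 \<le> real N * \<epsilon>" using e by simp
    thus ?thesis using lo hi by (simp add: abs_le_iff)
  qed
  have goal: "(\<lambda>N. measure_pmf.expectation (\<mu> N) (\<lambda>s. ln (I N s)) / real N) \<longlonglongrightarrow> S"
    unfolding tendsto_iff
  proof (intro allI impI)
    fix e :: real assume e: "e > 0"
    define \<epsilon> where "\<epsilon> = e / 8"
    have \<epsilon>: "\<epsilon> > 0" using e unfolding \<epsilon>_def by simp
    have ev1: "\<forall>\<^sub>F N in sequentially. 1 \<le> N" by (rule eventually_ge_at_top)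
    have ev2: "\<forall>\<^sub>F N in sequentially. dist (ln (J N) / real N) S < \<epsilon>"
      using laplace_K \<epsilon> unfolding tendsto_iff J_def S_def by blast
    have ev3: "\<forall>\<^sub>F N in sequentially. ln 2 \<le> real N * \<epsilon>" by (rule ev_lin[OF \<epsilon>])
    have ev4: "\<forall>\<^sub>F N in sequentially. ln C2 - S + \<delta> \<le> real N * \<delta>" by (rule ev_lin[OF \<delta>(1)])
    have ev5: "\<forall>\<^sub>F N in sequentially. dist (measure_pmf.prob (\<mu> N) (bad N \<epsilon>)) 0 < e / (8 * (M1 + 1))"
      using conv_prob[OF \<epsilon>] e M1pos unfolding tendsto_iff bad_def by simp
    show "\<forall>\<^sub>F N in sequentially. dist (measure_pmf.expectation (\<mu> N) (\<lambda>s. ln (I N s)) / real N) S < e"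
      using ev1 ev2 ev3 ev4 ev5
    proof eventually_elim
      case (elim N)
      have fin: "finite (set_pmf (\<mu> N))" using \<mu>_on \<Sigma>_finite by (rule finite_subset)
      have int: "integrable (measure_pmf (\<mu> N)) f" for f :: "'s \<Rightarrow> real"
        by (rule integrable_measure_pmf_finite[OF fin])
      define h where "h s = ln (I N s) / real N - S" for s
      have hb: "\<bar>h s\<bar> \<le> 3 * \<epsilon> + M1 * indicator (bad N \<epsilon>) s" if s: "s \<in> set_pmf (\<mu> N)" for s
      proof -
        have sS: "s \<in> \<Sigma> N" using s \<mu>_on by blast
        show ?thesis
        proof (cases "s \<in> bad N \<epsilon>")
          case True thus ?thesis using M1[OF elim(1) sS] \<epsilon> by (simp add: h_def)
        next
          case False
          have "\<bar>ln (I N s) - real N * S\<bar> \<le> 3 * real N * \<epsilon>"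
            using goodb[OF elim(1) sS False \<epsilon> elim(2) elim(3) elim(4)] .
          moreover have "h s = (ln (I N s) - real N * S) / real N"
            unfolding h_def using elim(1) by (simp add: field_simps)
          ultimately have "\<bar>h s\<bar> \<le> 3 * \<epsilon>" using elim(1)
            by (simp add: abs_div pos_divide_le_eq mult.commute mult.left_commute)
          thus ?thesis using False by simp
        qed
      qed
      have eq: "measure_pmf.expectation (\<mu> N) (\<lambda>s. ln (I N s)) / real N - S = measure_pmf.expectation (\<mu> N) h"
        unfolding h_def using int by (simp add: Bochner_Integration.integral_diff integral_divide_zero)
      have "\<bar>measure_pmf.expectation (\<mu> N) h\<bar> \<le> measure_pmf.expectation (\<mu> N) (\<lambda>s. \<bar>h s\<bar>)"
        using integral_norm_bound[of "measure_pmf (\<mu> N)" h] by simp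
      also have "\<dots> \<le> measure_pmf.expectation (\<mu> N) (\<lambda>s. 3 * \<epsilon> + M1 * indicator (bad N \<epsilon>) s)"
        by (rule integral_mono_AE[OF int int]) (use hb in \<open>auto intro!: AE_pmfI\<close>)
      also have "\<dots> = 3 * \<epsilon> + M1 * measure_pmf.prob (\<mu> N) (bad N \<epsilon>)"
        using int by (simp add: Bochner_Integration.integral_add)
      also have "\<dots> < e"
      proof -
        have p: "measure_pmf.prob (\<mu> N) (bad N \<epsilon>) < e / (8 * (M1 + 1))" using elim(5) by simp
        have "M1 * measure_pmf.prob (\<mu> N) (bad N \<epsilon>) \<le> (M1 + 1) * measure_pmf.prob (\<mu> N) (bad N \<epsilon>)"
          by (simp add: algebra_simps)
        also have "\<dots> \<le> (M1 + 1) * (e / (8 * (M1 + 1)))" using p M1pos by (intro mult_left_mono) auto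
        also have "\<dots> = e / 8" using M1pos by (simp add: field_simps)
        finally show ?thesis unfolding \<epsilon>_def using e by simp
      qed
      finally show ?case using eq by (simp add: dist_real_def)
    qed
  qed
  thus ?thesis unfolding I_def S_def .
qed
end
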